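(* Let $q$ be an odd prime power, $m\geq 2$ and $n=\frac{q^m+1}{2}$. Then the negacyclic BCH code $\mathcal{C}_{(q,n,2,0)}$, whose generator polynomial is $\mathbb{M}_{\beta}(x)$, has parameters $[n,n-2m,d]$, where $d=5$ if $q=3$; $d=3$ if $m$ is odd and $q>3$; and $d=4$ if $m$ is even and $q>3$.
   Context: Let $\ell$ be the order of $q$ modulo $2n$, $\alpha$ a primitive element of $\mathrm{GF}(q^\ell)$, $\beta=\alpha^{(q^\ell-1)/(2n)}$ (a primitive $2n$-th root of unity), and $\mathbb{M}_{\beta}(x)$ the minimal polynomial of $\beta$ over $\mathrm{GF}(q)$. $\mathcal{C}_{(q,n,2,0)}$ is the negacyclic code of length $n$ over $\mathrm{GF}(q)$, i.e. the ideal of $\mathrm{GF}(q)[x]/(x^n+1)$ generated by $\mathbb{M}_{\beta}(x)$. Parameters $[n,k,d]$ are length, dimension, minimum Hamming distance. *)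

theory Defs
  imports "HOL-Number_Theory.Number_Theory" "HOL-Computational_Algebra.Polynomial" "HOL-Library.Cardinality"
begin

text \<open>Field embedding of GF(q) (type 'a) into the extension field GF(q^l) (type 'b).\<close>
definition field_emb :: "('a::field \<Rightarrow> 'b::field) \<Rightarrow> bool" where
  "field_emb e \<longleftrightarrow> inj e \<and> e 0 = 0 \<and> e 1 = 1 \<and>
     (\<forall>x y. e (x + y) = e x + e y) \<and> (\<forall>x y. e (x * y) = e x * e y)"

definition min_poly :: "('a::field \<Rightarrow> 'b::field) \<Rightarrow> 'b \<Rightarrow> 'a poly" where
  "min_poly e b = (THE g. lead_coeff g = 1 \<and> poly (map_poly e g) b = 0 \<and>
      (\<forall>h. poly (map_poly e h) b = 0 \<longrightarrow> g dvd h))"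

definition primitive_elem :: "'b::{field,finite} \<Rightarrow> bool" where
  "primitive_elem a \<longleftrightarrow> (\<forall>x. x \<noteq> 0 \<longrightarrow> (\<exists>k. x = a ^ k))"

text \<open>Negacyclic code of length n generated by g: the ideal generated by g in
  F[x]/(x^n+1), residues represented by their remainders of degree < n.\<close>
definition negacyclic_code :: "nat \<Rightarrow> 'a::field poly \<Rightarrow> 'a poly set" where
  "negacyclic_code n g = {(g * f) mod (monom 1 n + 1) | f. True}"

definition hamming_wt :: "nat \<Rightarrow> 'a::zero poly \<Rightarrow> nat" where
  "hamming_wt n c = card {i. i < n \<and> coeff c i \<noteq> 0}"

definition min_dist :: "nat \<Rightarrow> 'a::zero poly set \<Rightarrow> nat" where
  "min_dist n C = Min {hamming_wt n c | c. c \<in> C \<and> c \<noteq> 0}"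

definition code_dim :: "'a::field poly set \<Rightarrow> nat" where
  "code_dim C = vector_space.dim (smult :: 'a \<Rightarrow> 'a poly \<Rightarrow> 'a poly) C"

end

theory Submission
  imports Defs
begin

lemma pow_card_same:
  fixes x :: "'c::{field,finite}"
  shows "x ^ CARD('c) = x"
proof (cases "x = 0")
  case False
  have "x * (\<Prod>y\<in>UNIV-{0}. x * y) = x * x ^ (card (UNIV :: 'c set) - 1) * \<Prod>(UNIV-{0})"
    by (simp add: prod.distrib mult_ac)
  also have "x * x ^ (card (UNIV :: 'c set) - 1) = x ^ Suc (card (UNIV :: 'c set) - 1)"
    by (subst power_Suc) auto
  also have "Suc (card (UNIV :: 'c set) - 1) = card (UNIV :: 'c set)"
    using finite_UNIV_card_ge_0[where ?'a = 'c] by simp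
  also have "(\<Prod>y\<in>UNIV-{0}. x * y) = (\<Prod>y\<in>UNIV-{0}. y)"
    by (rule prod.reindex_bij_witness[of _ "\<lambda>y. y / x" "\<lambda>y. x * y"]) (use False in auto)
  finally show ?thesis
    by simp
qed (use finite_UNIV_card_ge_0[where ?'a = 'c] in auto)

lemma pow_card_pow_same:
  fixes x :: "'c::{field,finite}"
  shows "x ^ (CARD('c) ^ j) = x"
  by (induction j) (simp_all add: pow_card_same power_mult)

lemma CHAR_prime_power:
  assumes "prime p" "CARD('c::{field,finite}) = p ^ N"
  shows "CHAR('c) = p"
proof -
  have pos: "CHAR('c) > 0" by (simp add: finite_imp_CHAR_pos)
  have pr: "prime CHAR('c)" using prime_CHAR_semidom[OF pos] .
  have "CHAR('c) dvd p ^ N" using CHAR_dvd_CARD[where 'a='c] assms(2) by simp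
  then have "CHAR('c) dvd p" using pr prime_dvd_power by blast
  then show ?thesis using pr assms(1) primes_dvd_imp_eq by blast
qed

locale cs =
  fixes q m n l p k :: nat and e :: "'a::{field,finite} \<Rightarrow> 'b::{field,finite}" and \<alpha> \<beta> :: 'b
  assumes p: "prime p" and kpos: "k > 0" and qpk: "q = p ^ k"
    and oddq: "odd q" and m2: "m \<ge> 2" and n_def: "n = (q ^ m + 1) div 2"
    and ca: "CARD('a) = q" and l_def: "l = ord (2 * n) q" and cb: "CARD('b) = q ^ l"
    and emb: "field_emb e" and prim: "primitive_elem \<alpha>"
    and beta: "\<beta> = \<alpha> ^ ((q ^ l - 1) div (2 * n))"
begin

lemma q_ge3: "q \<ge> 3"
proof -
  have "p > 1" using p prime_gt_1_nat by blast
  then have "q > 1" using qpk kpos one_less_power by blast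
  then show ?thesis using oddq by presburger
qed

lemma two_n: "2 * n = q ^ m + 1"
  using oddq n_def by simp

lemma e0[simp]: "e 0 = 0" and e1[simp]: "e 1 = 1" and eadd[simp]: "e (x + y) = e x + e y"
  and emult[simp]: "e (x * y) = e x * e y" and einj: "inj e"
  using emb unfolding field_emb_def by auto

lemma eminus[simp]: "e (- x) = - e x"
  by (metis add.right_inverse e0 eadd add_eq_0_iff)

lemma ediff[simp]: "e (x - y) = e x - e y"
  by (metis diff_conv_add_uminus eadd eminus)

lemma epow[simp]: "e (x ^ j) = e x ^ j"
  by (induction j) auto

lemma e_eq_iff[simp]: "e x = e y \<longleftrightarrow> x = y"
  using einj by (auto dest: injD)

lemma e_eq0_iff[simp]: "e x = 0 \<longleftrightarrow> x = 0"
  using e_eq_iff[of x 0] by simp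

lemma CHARb: "CHAR('b) = p"
  using CHAR_prime_power[OF p, where 'c='b] cb qpk by (simp add: power_mult[symmetric])

lemma CHARa: "CHAR('a) = p"
  using CHAR_prime_power[OF p, where 'c='a] ca qpk by simp

lemma frob: "(x + y :: 'b) ^ (q ^ j) = x ^ (q ^ j) + y ^ (q ^ j)"
  by (rule freshmans_dream'[where n = "k * j"]) (simp_all add: CHARb p qpk power_mult)

lemma frob_sum: "(sum f A :: 'b) ^ (q ^ j) = sum (\<lambda>i. f i ^ (q ^ j)) A"
  by (rule freshmans_dream_sum'[where n = "k * j"]) (simp_all add: CHARb p qpk power_mult)

lemma a_fix: "(x :: 'a) ^ (q ^ j) = x"
  using pow_card_pow_same[of x j] ca by simp

lemma e_fix: "e x ^ (q ^ j) = e x"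
  by (metis a_fix epow)

lemma e_fix1: "e x ^ q = e x"
  using e_fix[of x 1] by simp

end

context cs begin

lemma n_pos: "n > 0" using two_n by simp

lemma qm_ge: "q ^ m \<ge> 9"
proof -
  have "q ^ m \<ge> 3 ^ m" using q_ge3 by (simp add: power_mono)
  moreover have "(3::nat) ^ 2 \<le> 3 ^ m" by (rule power_increasing) (use m2 in auto)
  ultimately show ?thesis by simp
qed

lemma coprime_2n_q: "coprime (2 * n) q"
proof -
  have "coprime (q ^ m + 1) (q ^ m)" using coprime_Suc_left_nat[of "q ^ m"] by simp
  moreover have "m \<noteq> 0" using m2 by simp
  ultimately have "coprime (q ^ m + 1) q" using coprime_power_right_iff[of "q ^ m + 1" q m] by blast
  then show ?thesis using two_n by simp
qed

lemma not_cong1: assumes "0 < s" "s < 2 * m" shows "\<not> [q ^ s = 1] (mod (2 * n))"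
proof
  assume c: "[q ^ s = 1] (mod (2 * n))"
  have q1: "q ^ s \<ge> 1" using q_ge3 by simp
  then have dv: "2 * n dvd q ^ s - 1" using c cong_altdef_nat by blast
  show False
  proof (cases "s \<le> m")
    case True
    have "q ^ s \<le> q ^ m" using True q_ge3 by (simp add: power_increasing)
    moreover have "q ^ 1 \<le> q ^ s" using q_ge3 assms(1) by (intro power_increasing) auto
    then have "q ^ s \<ge> 3" using q_ge3 by simp
    ultimately have "0 < q ^ s - 1" "q ^ s - 1 < 2 * n" using two_n by auto
    then show False using dv by (simp add: nat_dvd_not_less)
  next
    case False
    define r where "r = s - m"
    have r: "0 < r" "r < m" "s = m + r" using False assms r_def by auto
    have le: "q ^ r + 1 \<le> q ^ r * (q ^ m + 1)" using q_ge3 by (simp add: algebra_simps)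
    have "q ^ s - 1 = q ^ r * (q ^ m + 1) - (q ^ r + 1)"
      using r by (simp add: power_add algebra_simps)
    then have d1: "2 * n dvd q ^ r * (q ^ m + 1) - (q ^ r + 1)" using dv by simp
    have d2: "2 * n dvd q ^ r * (q ^ m + 1)" unfolding two_n[symmetric] by (rule dvd_triv_right)
    have "2 * n dvd q ^ r * (q ^ m + 1) - (q ^ r * (q ^ m + 1) - (q ^ r + 1))"
      by (rule dvd_diff_nat[OF d2 d1])
    then have "2 * n dvd q ^ r + 1" using le by simp
    moreover have "q ^ r < q ^ m" using r q_ge3 by (simp add: power_strict_increasing)
    ultimately show False using two_n by (simp add: nat_dvd_not_less)
  qed
qed

lemma sq_minus1: "(x::nat) * x - 1 = (x + 1) * (x - 1)"
  by (cases x) (auto simp: algebra_simps)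

lemma cong_2m: "[q ^ (2 * m) = 1] (mod (2 * n))"
proof -
  have "q ^ (2 * m) = q ^ m * q ^ m" by (simp add: mult_2 power_add)
  then have "q ^ (2 * m) - 1 = (2 * n) * (q ^ m - 1)" using sq_minus1 two_n by simp
  then have "2 * n dvd q ^ (2 * m) - 1" by (metis dvd_triv_left)
  moreover have "q ^ (2 * m) \<ge> 1" using q_ge3 by simp
  ultimately show ?thesis using cong_altdef_nat by blast
qed

lemma l_eq: "l = 2 * m"
proof -
  have "l dvd 2 * m" using cong_2m l_def ord_divides by blast
  moreover have "l > 0" using l_def coprime_2n_q ord_eq_0 by (metis coprime_commute gr0I)
  moreover have "[q ^ l = 1] (mod (2 * n))" using l_def ord by blast
  ultimately have "\<not> l < 2 * m" using not_cong1[of l] by blast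
  moreover have "l \<le> 2 * m" using \<open>l dvd 2 * m\<close> m2 by (intro dvd_imp_le) auto
  ultimately show ?thesis by simp
qed

lemma cb2: "CARD('b) = q ^ (2 * m)" using cb l_eq by simp

lemma dvd_Nb: "2 * n dvd q ^ (2 * m) - 1"
  using cong_2m cong_altdef_nat q_ge3 by (metis one_le_power le_trans one_le_numeral nat_le_linear not_less_eq_eq)

definition Nb where "Nb = q ^ (2 * m) - 1"
definition M where "M = Nb div (2 * n)"

lemma Nb_eq: "Nb = 2 * n * M"
  using dvd_Nb unfolding M_def Nb_def by simp

lemma card_nonzero: "card (UNIV - {0::'b}) = Nb"
  using cb2 unfolding Nb_def by (simp add: card_Diff_subset)

lemma Nb_big: "Nb \<ge> 8"
proof -
  have "q ^ (2 * m) \<ge> q ^ m" using q_ge3 by (intro power_increasing) auto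
  then show ?thesis using qm_ge unfolding Nb_def by simp
qed

lemma M_pos: "M > 0" using Nb_eq Nb_big by (cases M) auto

lemma alpha_nz: "\<alpha> \<noteq> 0"
proof
  assume a0: "\<alpha> = 0"
  have "UNIV - {0::'b} \<subseteq> {1}"
  proof
    fix x :: 'b assume "x \<in> UNIV - {0}"
    then obtain j where "x = \<alpha> ^ j" using prim unfolding primitive_elem_def by auto
    then show "x \<in> {1}" using a0 \<open>x \<in> UNIV - {0}\<close> by (cases j) auto
  qed
  then have "card (UNIV - {0::'b}) \<le> card {1::'b}" by (intro card_mono) auto
  then show False using card_nonzero Nb_big by simp
qed

lemma alpha_Nb: "\<alpha> ^ Nb = 1"
proof -
  have e: "CARD('b) = Suc Nb" using cb2 q_ge3 unfolding Nb_def by simp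
  have "\<alpha> ^ CARD('b) = \<alpha>" by (rule pow_card_same)
  then have "\<alpha> ^ Suc Nb = \<alpha>" by (simp only: e)
  then have "\<alpha> * \<alpha> ^ Nb = \<alpha> * 1" by simp
  then show ?thesis using alpha_nz by simp
qed

lemma alpha_order: assumes "\<alpha> ^ d = 1" "d > 0" shows "Nb \<le> d"
proof -
  have "UNIV - {0::'b} \<subseteq> (\<lambda>i. \<alpha> ^ i) ` {..<d}"
  proof
    fix x :: 'b assume "x \<in> UNIV - {0}"
    then obtain j where j: "x = \<alpha> ^ j" using prim unfolding primitive_elem_def by auto
    have "\<alpha> ^ j = \<alpha> ^ (d * (j div d) + j mod d)" by simp
    also have "\<dots> = (\<alpha> ^ d) ^ (j div d) * \<alpha> ^ (j mod d)" by (simp only: power_add power_mult)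
    also have "\<dots> = \<alpha> ^ (j mod d)" using assms(1) by simp
    finally show "x \<in> (\<lambda>i. \<alpha> ^ i) ` {..<d}" using j assms(2) by auto
  qed
  then have "card (UNIV - {0::'b}) \<le> card ((\<lambda>i. \<alpha> ^ i) ` {..<d})" by (intro card_mono) auto
  also have "\<dots> \<le> d" using card_image_le[of "{..<d}"] by simp
  finally show ?thesis using card_nonzero by simp
qed

lemma alpha_pow_eq1: "\<alpha> ^ j = 1 \<longleftrightarrow> Nb dvd j"
proof
  assume a: "\<alpha> ^ j = 1"
  have "\<alpha> ^ j = \<alpha> ^ (Nb * (j div Nb) + j mod Nb)" by simp
  also have "\<dots> = (\<alpha> ^ Nb) ^ (j div Nb) * \<alpha> ^ (j mod Nb)" by (simp only: power_add power_mult)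
  also have "\<dots> = \<alpha> ^ (j mod Nb)" using alpha_Nb by simp
  finally have "\<alpha> ^ (j mod Nb) = 1" using a by simp
  moreover have "j mod Nb < Nb" using Nb_big by simp
  ultimately have "j mod Nb = 0" using alpha_order[of "j mod Nb"] by (meson leD neq0_conv)
  then show "Nb dvd j" by auto
next
  assume "Nb dvd j"
  then obtain t where "j = Nb * t" by auto
  then show "\<alpha> ^ j = 1" using alpha_Nb by (simp add: power_mult)
qed

lemma beta_M: "\<beta> = \<alpha> ^ M"
  using beta l_eq unfolding M_def Nb_def by simp

lemma beta_pow_eq1: "\<beta> ^ j = 1 \<longleftrightarrow> 2 * n dvd j"
proof -
  have "\<beta> ^ j = \<alpha> ^ (M * j)" using beta_M by (simp add: power_mult)
  then have "\<beta> ^ j = 1 \<longleftrightarrow> 2 * n * M dvd M * j" using alpha_pow_eq1 Nb_eq by simp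
  also have "\<dots> \<longleftrightarrow> 2 * n dvd j" using M_pos by (simp add: mult.commute[of _ M])
  finally show ?thesis .
qed

lemma beta_nz: "\<beta> \<noteq> 0"
  using beta_M alpha_nz by simp

lemma beta_n: "\<beta> ^ n = -1"
proof -
  have "(\<beta> ^ n) ^ 2 = 1" using beta_pow_eq1[of "n * 2"] by (simp add: power_mult)
  then have "(\<beta> ^ n - 1) * (\<beta> ^ n + 1) = 0" by (simp add: algebra_simps power2_eq_square)
  moreover have "\<beta> ^ n \<noteq> 1" using beta_pow_eq1[of n] n_pos by auto
  ultimately show ?thesis by (simp add: add_eq_0_iff2)
qed

lemma beta_pow_eq: assumes "i \<le> j" "\<beta> ^ i = \<beta> ^ j" shows "2 * n dvd j - i"
proof -
  have "\<beta> ^ j = \<beta> ^ i * \<beta> ^ (j - i)" using assms(1) by (simp flip: power_add)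
  then have "\<beta> ^ (j - i) = 1" using assms(2) beta_nz by simp
  then show ?thesis using beta_pow_eq1 by blast
qed

lemma beta_2m: "\<beta> ^ (q ^ (2 * m)) = \<beta>"
proof -
  have "q ^ (2 * m) \<ge> 1" using q_ge3 by simp
  then have "q ^ (2 * m) = 2 * n * M + 1" using Nb_eq unfolding Nb_def by simp
  then have "\<beta> ^ (q ^ (2 * m)) = (\<beta> ^ (2 * n)) ^ M * \<beta>"
    by (simp only: power_add power_mult power_one_right)
  also have "\<dots> = \<beta>" using beta_pow_eq1[of "2 * n"] by simp
  finally show ?thesis .
qed

lemma beta_qm: "\<beta> ^ (q ^ m) * \<beta> = 1"
  using beta_pow_eq1[of "q ^ m + 1"] two_n by (simp add: mult.commute)

end

context cs begin

definition ev :: "'a poly \<Rightarrow> 'b \<Rightarrow> 'b" where "ev f x = poly (map_poly e f) x"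

lemma coeff_mape[simp]: "coeff (map_poly e f) i = e (coeff f i)"
  by (simp add: coeff_map_poly)

lemma map_add: "map_poly e (f + g) = map_poly e f + map_poly e g"
  by (intro poly_eqI) simp

lemma map_diff: "map_poly e (f - g) = map_poly e f - map_poly e g"
  by (intro poly_eqI) simp

lemma map_smult: "map_poly e (smult a f) = smult (e a) (map_poly e f)"
  by (intro poly_eqI) simp

lemma map_pCons: "map_poly e (pCons a f) = pCons (e a) (map_poly e f)"
  by (rule map_poly_pCons) simp

lemma map_mult: "map_poly e (f * g) = map_poly e f * map_poly e g"
proof (induction f)
  case 0
  then show ?case by simp
next
  case (pCons a p)
  have "map_poly e (pCons a p * g) = map_poly e (smult a g + pCons 0 (p * g))" by simp
  also have "\<dots> = smult (e a) (map_poly e g) + pCons 0 (map_poly e p * map_poly e g)"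
    by (simp only: map_add map_smult map_pCons pCons.IH e0)
  also have "\<dots> = map_poly e (pCons a p) * map_poly e g" by (simp add: map_pCons)
  finally show ?case .
qed

lemma map_monom: "map_poly e (monom a i) = monom (e a) i"
  by (rule map_poly_monom) simp

lemma ev_add: "ev (f + g) x = ev f x + ev g x" unfolding ev_def by (simp add: map_add)
lemma ev_diff: "ev (f - g) x = ev f x - ev g x" unfolding ev_def by (simp add: map_diff)
lemma ev_mult: "ev (f * g) x = ev f x * ev g x" unfolding ev_def by (simp add: map_mult)
lemma ev_smult: "ev (smult a f) x = e a * ev f x" unfolding ev_def by (simp add: map_smult)
lemma ev_monom: "ev (monom a i) x = e a * x ^ i" unfolding ev_def by (simp add: map_monom poly_monom)
lemma ev_0[simp]: "ev 0 x = 0" unfolding ev_def by simp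
lemma ev_1: "ev 1 x = 1" unfolding ev_def by simp

lemma ev_sum: "ev (sum f A) x = (\<Sum>i\<in>A. ev (f i) x)"
  by (induction A rule: infinite_finite_induct) (simp_all add: ev_add)

lemma ev_altdef: "ev f x = (\<Sum>i\<le>degree f. e (coeff f i) * x ^ i)"
proof -
  have "ev f x = ev (\<Sum>i\<le>degree f. monom (coeff f i) i) x" by (simp add: poly_as_sum_of_monoms)
  also have "\<dots> = (\<Sum>i\<le>degree f. e (coeff f i) * x ^ i)" by (simp add: ev_sum ev_monom)
  finally show ?thesis .
qed

lemma ev_frob: "ev f (x ^ (q ^ j)) = (ev f x) ^ (q ^ j)"
proof -
  have "(ev f x) ^ (q ^ j) = (\<Sum>i\<le>degree f. (e (coeff f i) * x ^ i) ^ (q ^ j))"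
    by (simp add: ev_altdef frob_sum)
  also have "\<dots> = (\<Sum>i\<le>degree f. e (coeff f i) * (x ^ (q ^ j)) ^ i)"
    by (intro sum.cong refl) (simp add: power_mult_distrib e_fix flip: power_mult add: mult.commute)
  also have "\<dots> = ev f (x ^ (q ^ j))" by (simp add: ev_altdef)
  finally show ?thesis by simp
qed

lemma conj_distinct: assumes "i < j" "j < 2 * m" shows "\<beta> ^ (q ^ i) \<noteq> \<beta> ^ (q ^ j)"
proof
  assume eq: "\<beta> ^ (q ^ i) = \<beta> ^ (q ^ j)"
  have le: "q ^ i \<le> q ^ j" using assms q_ge3 by (intro power_increasing) auto
  have "2 * n dvd q ^ j - q ^ i" using beta_pow_eq[OF le eq] .
  moreover have "q ^ j - q ^ i = q ^ i * (q ^ (j - i) - 1)"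
    using assms by (simp add: diff_mult_distrib2 flip: power_add)
  ultimately have "2 * n dvd q ^ i * (q ^ (j - i) - 1)" by simp
  moreover have "coprime (2 * n) (q ^ i)" using coprime_2n_q by simp
  ultimately have "2 * n dvd q ^ (j - i) - 1" using coprime_dvd_mult_right_iff by blast
  moreover have "q ^ (j - i) \<ge> 1" using q_ge3 by simp
  ultimately have "[q ^ (j - i) = 1] (mod (2 * n))" using cong_altdef_nat by blast
  moreover have "0 < j - i" "j - i < 2 * m" using assms by auto
  ultimately show False using not_cong1[of "j - i"] by blast
qed

lemma map_e_nz: "f \<noteq> 0 \<Longrightarrow> map_poly e f \<noteq> 0"
  by (subst map_poly_eq_0_iff) auto

lemma degree_map_e[simp]: "degree (map_poly e f) = degree f"
  by (rule degree_map_poly) simp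

lemma root_degree: assumes "f \<noteq> 0" "ev f \<beta> = 0" shows "degree f \<ge> 2 * m"
proof -
  let ?R = "(\<lambda>i. \<beta> ^ (q ^ i)) ` {..<2 * m}"
  have inj: "inj_on (\<lambda>i. \<beta> ^ (q ^ i)) {..<2 * m}"
    unfolding inj_on_def by (metis conj_distinct lessThan_iff nat_neq_iff)
  have "?R \<subseteq> {x. poly (map_poly e f) x = 0}"
  proof
    fix x assume "x \<in> ?R"
    then obtain i where "x = \<beta> ^ (q ^ i)" by auto
    then have "ev f x = 0" using ev_frob[of f \<beta> i] assms(2) q_ge3 by simp
    then show "x \<in> {x. poly (map_poly e f) x = 0}" unfolding ev_def by simp
  qed
  then have "card ?R \<le> card {x. poly (map_poly e f) x = 0}"
    by (intro card_mono poly_roots_finite map_e_nz assms(1))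
  also have "\<dots> \<le> degree (map_poly e f)" by (intro card_poly_roots_bound map_e_nz assms(1))
  finally show ?thesis using card_image[OF inj] by simp
qed

lemma exist_low: "\<exists>f. f \<noteq> 0 \<and> degree f \<le> 2 * m \<and> ev f \<beta> = 0"
proof -
  define D where "D = PiE {..2 * m} (\<lambda>_. UNIV :: 'a set)"
  define F where "F c = (\<Sum>i\<le>2 * m. e (c i) * \<beta> ^ i)" for c
  have cD: "card D = q ^ (2 * m + 1)"
    unfolding D_def by (simp add: card_PiE ca)
  have "card (F ` D) \<le> card (UNIV :: 'b set)" by (intro card_mono) auto
  then have c1: "card (F ` D) \<le> q ^ (2 * m)" using cb2 by simp
  have c2: "q ^ (2 * m) < q * q ^ (2 * m)" using q_ge3 by simp
  have c3: "card D = q * q ^ (2 * m)" using cD by simp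
  have "card (F ` D) < card D" using c1 c2 c3 by linarith
  then have "\<not> inj_on F D" using card_image by fastforce
  then obtain c1 c2 where c: "c1 \<in> D" "c2 \<in> D" "c1 \<noteq> c2" "F c1 = F c2"
    unfolding inj_on_def by blast
  obtain j where j: "j \<le> 2 * m" "c1 j \<noteq> c2 j"
    using c(1-3) unfolding D_def by (metis PiE_ext atMost_iff)
  define f where "f = (\<Sum>i\<le>2 * m. monom (c1 i - c2 i) i)"
  have cf: "coeff f i = (if i \<le> 2 * m then c1 i - c2 i else 0)" for i
    unfolding f_def by (simp add: coeff_sum)
  have "f \<noteq> 0" using cf[of j] j by auto
  moreover have "degree f \<le> 2 * m" by (rule degree_le) (simp add: cf)
  moreover have "ev f \<beta> = F c1 - F c2"
    unfolding f_def F_def by (simp add: ev_sum ev_monom algebra_simps sum_subtractf)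
  ultimately show ?thesis using c(4) by auto
qed

lemma monic_dvd_antisym:
  fixes g h :: "'c::field poly"
  assumes "lead_coeff g = 1" "lead_coeff h = 1" "g dvd h" "h dvd g"
  shows "g = h"
proof -
  obtain r where r: "h = g * r" using assms(3) by auto
  have nz: "g \<noteq> 0" "h \<noteq> 0" using assms(1,2) by auto
  then have rnz: "r \<noteq> 0" using r by auto
  have "degree h = degree g + degree r" using r nz rnz by (simp add: degree_mult_eq)
  moreover have "degree h \<le> degree g" using assms(4) nz by (simp add: dvd_imp_degree_le)
  ultimately have "degree r = 0" by simp
  moreover have "lead_coeff r = 1" using r assms(1,2) by (simp add: lead_coeff_mult)
  ultimately have "r = 1" by (auto elim!: degree_eq_zeroE simp: one_pCons) 
  then show ?thesis using r by simp
qed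

definition gmin where "gmin = (SOME g. lead_coeff g = 1 \<and> degree g = 2 * m \<and> ev g \<beta> = 0 \<and>
      (\<forall>h. ev h \<beta> = 0 \<longrightarrow> g dvd h))"

lemma gmin_ex: "\<exists>g. lead_coeff g = 1 \<and> degree g = 2 * m \<and> ev g \<beta> = 0 \<and>
      (\<forall>h. ev h \<beta> = 0 \<longrightarrow> g dvd h)"
proof -
  obtain f where f: "f \<noteq> 0" "degree f \<le> 2 * m" "ev f \<beta> = 0" using exist_low by blast
  have df: "degree f = 2 * m" using root_degree[OF f(1,3)] f(2) by simp
  define g where "g = smult (inverse (lead_coeff f)) f"
  have lg: "lead_coeff g = 1" unfolding g_def using f(1) by (simp add: lead_coeff_smult)
  have "lead_coeff f \<noteq> 0" using f(1) by simp
  then have dg: "degree g = 2 * m" unfolding g_def using df by (simp only: degree_smult_eq inverse_eq_imp_eq inverse_zero if_False inverse_nonzero_iff_nonzero)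
  have eg: "ev g \<beta> = 0" unfolding g_def by (simp add: ev_smult f(3))
  have "g dvd h" if h: "ev h \<beta> = 0" for h
  proof -
    have gnz: "g \<noteq> 0" using lg by auto
    have "h = h div g * g + h mod g" by simp
    then have "ev h \<beta> = ev (h div g) \<beta> * ev g \<beta> + ev (h mod g) \<beta>"
      by (metis ev_add ev_mult)
    then have er: "ev (h mod g) \<beta> = 0" using h eg by simp
    have "h mod g = 0"
    proof (rule ccontr)
      assume "h mod g \<noteq> 0"
      then have "degree (h mod g) < 2 * m" using degree_mod_less'[OF gnz] dg by simp
      then show False using root_degree[OF \<open>h mod g \<noteq> 0\<close> er] by simp
    qed
    then show ?thesis by (simp add: mod_eq_0_iff_dvd)
  qed
  then show ?thesis using lg dg eg by blast
qed

lemma gmin: "lead_coeff gmin = 1" "degree gmin = 2 * m" "ev gmin \<beta> = 0"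
  "\<And>h. ev h \<beta> = 0 \<Longrightarrow> gmin dvd h"
  using someI_ex[OF gmin_ex] unfolding gmin_def by blast+

lemma min_poly_eq: "min_poly e \<beta> = gmin"
  unfolding min_poly_def
proof (rule the_equality)
  show "lead_coeff gmin = 1 \<and> poly (map_poly e gmin) \<beta> = 0 \<and>
    (\<forall>h. poly (map_poly e h) \<beta> = 0 \<longrightarrow> gmin dvd h)"
    using gmin unfolding ev_def by blast
next
  fix g assume g: "lead_coeff g = 1 \<and> poly (map_poly e g) \<beta> = 0 \<and>
    (\<forall>h. poly (map_poly e h) \<beta> = 0 \<longrightarrow> g dvd h)"
  have "g dvd gmin" using g gmin(3) unfolding ev_def by blast
  moreover have "gmin dvd g" using g gmin(4) unfolding ev_def by blast
  ultimately show "g = gmin" using monic_dvd_antisym g gmin(1) by blast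
qed

definition Xn :: "'a poly" where "Xn = monom 1 n + 1"

lemma ev_Xn: "ev Xn \<beta> = 0"
  unfolding Xn_def by (simp add: ev_add ev_monom ev_1 beta_n)

lemma gmin_dvd_Xn: "gmin dvd Xn" using gmin(4) ev_Xn by blast

lemma degree_Xn: "degree Xn = n" and Xn_nz: "Xn \<noteq> 0"
proof -
  have "degree (monom (1::'a) n) = n" by (simp add: degree_monom_eq)
  moreover have "degree (1::'a poly) < n" using n_pos by simp
  ultimately show "degree Xn = n" unfolding Xn_def by (simp add: degree_add_eq_left)
  then show "Xn \<noteq> 0" using n_pos by auto
qed

end

lemma pow3_bound: "(m::nat) \<ge> 2 \<Longrightarrow> 4 * m < 3 ^ m + 1"
proof (induction m rule: nat_induct_at_least)
  case base then show ?case by simp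
next
  case (Suc m) then show ?case by simp
qed

interpretation PV: vector_space "smult :: 'c::field \<Rightarrow> 'c poly \<Rightarrow> 'c poly"
  by unfold_locales (simp_all add: smult_add_right smult_add_left)

context cs begin

lemma n_gt_2m: "2 * m < n"
proof -
  have "(3::nat) ^ m \<le> q ^ m" using q_ge3 by (simp add: power_mono)
  then show ?thesis using pow3_bound[OF m2] two_n by linarith
qed

definition K where "K = n - 2 * m"

lemma K_pos: "K > 0" using n_gt_2m unfolding K_def by simp

lemma gmin_nz: "gmin \<noteq> 0" using gmin(1) by auto

lemma code_char: "negacyclic_code n gmin = {c. degree c < n \<and> ev c \<beta> = 0}"
proof (rule equalityI; rule subsetI)
  fix c assume "c \<in> negacyclic_code n gmin"
  then obtain f where c: "c = (gmin * f) mod Xn" unfolding negacyclic_code_def Xn_def by auto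
  have "degree c < n"
  proof (cases "c = 0")
    case True then show ?thesis using n_pos by simp
  next
    case False then show ?thesis using degree_mod_less'[OF Xn_nz] c degree_Xn by simp
  qed
  moreover have "gmin dvd c" unfolding c by (intro dvd_mod gmin_dvd_Xn) simp
  then have "ev c \<beta> = 0" using gmin(3) by (auto simp: ev_mult)
  ultimately show "c \<in> {c. degree c < n \<and> ev c \<beta> = 0}" by simp
next
  fix c assume "c \<in> {c. degree c < n \<and> ev c \<beta> = 0}"
  then have c: "degree c < n" "ev c \<beta> = 0" by auto
  obtain f where f: "c = gmin * f" using gmin(4)[OF c(2)] by auto
  have "c mod Xn = c" using c(1) degree_Xn by (intro mod_poly_less) simp
  then have "c = (gmin * f) mod Xn" using f by simp
  then show "c \<in> negacyclic_code n gmin" unfolding negacyclic_code_def Xn_def by blast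
qed

lemma code_char2: "negacyclic_code n gmin = {gmin * f | f. degree f < K}"
proof (rule equalityI; rule subsetI)
  fix c assume "c \<in> negacyclic_code n gmin"
  then have c: "degree c < n" "ev c \<beta> = 0" using code_char by auto
  obtain f where f: "c = gmin * f" using gmin(4)[OF c(2)] by auto
  have "degree f < K"
  proof (cases "f = 0")
    case True then show ?thesis using K_pos by simp
  next
    case False
    then have "degree c = 2 * m + degree f" using f gmin_nz gmin(2) by (simp add: degree_mult_eq)
    then show ?thesis using c(1) unfolding K_def by simp
  qed
  then show "c \<in> {gmin * f | f. degree f < K}" using f by auto
next
  fix c assume "c \<in> {gmin * f | f. degree f < K}"
  then obtain f where f: "c = gmin * f" "degree f < K" by auto
  have "degree c < n"
  proof (cases "f = 0")
    case True then show ?thesis using f n_pos by simp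
  next
    case False
    then have "degree c = 2 * m + degree f" using f gmin_nz gmin(2) by (simp add: degree_mult_eq)
    then show ?thesis using f(2) unfolding K_def by simp
  qed
  moreover have "ev c \<beta> = 0" using f gmin(3) by (simp add: ev_mult)
  ultimately show "c \<in> negacyclic_code n gmin" using code_char by simp
qed

definition bv where "bv i = gmin * monom 1 i"

lemma degree_bv: "degree (bv i) = 2 * m + i"
  unfolding bv_def using gmin_nz gmin(2) by (simp add: degree_mult_eq degree_monom_eq)

lemma inj_bv: "inj_on bv {..<K}"
  by (intro inj_onI) (metis add_left_cancel degree_bv)

lemma sum_bv: "(\<Sum>i<K. smult (u i) (bv i)) = gmin * (\<Sum>i<K. monom (u i) i)"
proof -
  have "smult (u i) (gmin * monom 1 i) = gmin * monom (u i) i" for i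
    by (simp add: smult_monom flip: mult_smult_right)
  then show ?thesis unfolding bv_def by (simp add: sum_distrib_left)
qed

lemma code_dim_eq: "code_dim (negacyclic_code n gmin) = K"
proof -
  let ?B = "bv ` {..<K}"
  let ?C = "negacyclic_code n gmin"
  have "?B \<subseteq> ?C"
  proof
    fix x assume "x \<in> ?B"
    then obtain i where "i < K" "x = bv i" by auto
    then show "x \<in> ?C" unfolding code_char2 bv_def by (auto simp: degree_monom_eq)
  qed
  moreover have "?C \<subseteq> PV.span ?B"
  proof
    fix c assume "c \<in> ?C"
    then obtain f where f: "c = gmin * f" "degree f < K" unfolding code_char2 by auto
    have "f = (\<Sum>i\<le>K - 1. monom (coeff f i) i)" using f(2) by (simp add: poly_as_sum_of_monoms')
    also have "{..K - 1} = {..<K}" using K_pos by auto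
    finally have "c = (\<Sum>i<K. smult (coeff f i) (bv i))" using f(1) by (simp add: sum_bv)
    also have "\<dots> \<in> PV.span ?B"
      by (intro PV.span_sum PV.span_scale PV.span_base) auto
    finally show "c \<in> PV.span ?B" .
  qed
  moreover have "PV.independent ?B"
  proof
    assume "PV.dependent ?B"
    then obtain u v where uv: "v \<in> ?B" "u v \<noteq> 0" "(\<Sum>v\<in>?B. smult (u v) v) = 0"
      using PV.dependent_finite[of ?B] by auto
    have "(\<Sum>v\<in>?B. smult (u v) v) = (\<Sum>i<K. smult (u (bv i)) (bv i))"
      using sum.reindex[OF inj_bv, of "\<lambda>v. smult (u v) v"] by simp
    also have "\<dots> = gmin * (\<Sum>i<K. monom (u (bv i)) i)" by (rule sum_bv)
    finally have "(\<Sum>i<K. monom (u (bv i)) i) = 0" using uv(3) gmin_nz by simp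
    moreover obtain i where i: "i < K" "v = bv i" using uv(1) by auto
    ultimately have "coeff (\<Sum>i<K. monom (u (bv i)) i) i = 0" by simp
    then have "u (bv i) = 0" using i(1) by (simp add: coeff_sum)
    then show False using uv(2) i(2) by simp
  qed
  moreover have "card ?B = K" using card_image[OF inj_bv] by simp
  ultimately show ?thesis unfolding code_dim_def by (rule PV.dim_unique)
qed

end

context cs begin

lemma nt_div: assumes "d dvd q ^ m - 1" "(q ^ m + 1) dvd t * d" shows "n dvd t"
proof -
  have g2: "gcd d (q ^ m + 1) dvd 2"
  proof -
    have f1: "gcd d (q ^ m + 1) dvd q ^ m - 1" using assms(1) by (meson dvd_trans gcd_dvd1)
    have f2: "gcd d (q ^ m + 1) dvd q ^ m + 1" by simp
    have "gcd d (q ^ m + 1) dvd (q ^ m + 1) - (q ^ m - 1)" by (rule dvd_diff_nat[OF f2 f1])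
    moreover have "(q ^ m + 1) - (q ^ m - 1) = 2" using qm_ge by simp
    ultimately show ?thesis by simp
  qed
  have "(q ^ m + 1) dvd gcd (t * d) (t * (q ^ m + 1))" by (rule gcd_greatest[OF assms(2) dvd_triv_right])
  also have "gcd (t * d) (t * (q ^ m + 1)) = t * gcd d (q ^ m + 1)" by (simp add: gcd_mult_distrib_nat)
  also have "\<dots> dvd t * 2" using g2 by simp
  finally have "2 * n dvd 2 * t" using two_n by (simp add: mult.commute)
  then show ?thesis by simp
qed

lemma dvd_qm1_2: "2 dvd q ^ m - 1"
  using oddq q_ge3 by (simp add: odd_pos)

lemma dvd_qm1_qm: "q - 1 dvd q ^ m - 1"
proof -
  have "[q = 1] (mod (q - 1))" using q_ge3 by (simp add: cong_altdef_nat)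
  then have "[q ^ m = 1 ^ m] (mod (q - 1))" by (rule cong_pow)
  then show ?thesis using q_ge3 by (simp add: cong_altdef_nat)
qed

lemma dvd_qp1_qm: assumes "even m" shows "q + 1 dvd q ^ m - 1"
proof -
  have d: "(q + 1) dvd q * q - 1" unfolding sq_minus1 by (rule dvd_triv_left)
  have le: "1 \<le> q * q" using q_ge3 by simp
  have "[q * q = 1] (mod (q + 1))" using cong_altdef_nat[OF le] d by blast
  then have "[(q * q) ^ (m div 2) = 1 ^ (m div 2)] (mod (q + 1))" by (rule cong_pow)
  moreover have "(q * q) ^ (m div 2) = q ^ m" using assms
    by (metis dvd_mult_div_cancel mult_2 power2_eq_square power_mult)
  ultimately have c: "[q ^ m = 1] (mod (q + 1))" by simp
  have le2: "1 \<le> q ^ m" using q_ge3 by simp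
  show ?thesis using cong_altdef_nat[OF le2] c by blast
qed

lemma beta_diff_lt: assumes "d dvd q ^ m - 1" "d > 0" "i < j" "j < n"
  shows "(\<beta> ^ i) ^ d \<noteq> (\<beta> ^ j) ^ d"
proof
  assume eq: "(\<beta> ^ i) ^ d = (\<beta> ^ j) ^ d"
  have "(\<beta> ^ j) ^ d = \<beta> ^ (j * d)" by (simp add: power_mult)
  also have "j * d = i * d + (j - i) * d" using assms(3) by (simp flip: add_mult_distrib)
  also have "\<beta> ^ (i * d + (j - i) * d) = (\<beta> ^ i) ^ d * \<beta> ^ ((j - i) * d)"
    by (simp add: power_add power_mult)
  finally have "(\<beta> ^ j) ^ d = (\<beta> ^ i) ^ d * \<beta> ^ ((j - i) * d)" .
  then have "\<beta> ^ ((j - i) * d) = 1" using eq beta_nz by simp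
  then have "q ^ m + 1 dvd (j - i) * d" using beta_pow_eq1 two_n by simp
  then have "n dvd j - i" using nt_div assms(1) by blast
  moreover have "0 < j - i" "j - i < n" using assms by auto
  ultimately show False by (simp add: nat_dvd_not_less)
qed

lemma beta_diff: assumes "d dvd q ^ m - 1" "d > 0" "i \<noteq> j" "i < n" "j < n"
  shows "(\<beta> ^ i) ^ d \<noteq> (\<beta> ^ j) ^ d"
  using beta_diff_lt[OF assms(1,2)] assms(3-5) by (metis nat_neq_iff)

lemma beta_sq_diff: "i \<noteq> j \<Longrightarrow> i < n \<Longrightarrow> j < n \<Longrightarrow> (\<beta> ^ i)^2 \<noteq> (\<beta> ^ j)^2"
  using beta_diff[OF dvd_qm1_2] by simp

lemma sig_add: "(x + y :: 'b) ^ (q ^ m) = x ^ (q ^ m) + y ^ (q ^ m)" by (rule frob)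

lemma sig_minus: "(- x :: 'b) ^ (q ^ m) = - (x ^ (q ^ m))"
proof -
  have "(x + - x) ^ (q ^ m) = 0" using q_ge3 by simp
  then show ?thesis unfolding sig_add by (simp add: add_eq_0_iff)
qed

lemma sig_beta: "(\<beta> ^ i) ^ (q ^ m) = inverse (\<beta> ^ i)"
proof -
  have "\<beta> ^ (q ^ m) = inverse \<beta>" using beta_qm beta_nz by (simp add: field_simps)
  have "(\<beta> ^ i) ^ (q ^ m) = (\<beta> ^ (q ^ m)) ^ i" by (simp only: power_mult[symmetric] mult.commute)
  also have "\<dots> = (inverse \<beta>) ^ i" using \<open>\<beta> ^ (q ^ m) = inverse \<beta>\<close> by simp
  also have "\<dots> = inverse (\<beta> ^ i)" by (rule power_inverse)
  finally show ?thesis .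
qed

end

context cs begin

lemma bnz: "\<beta> ^ i \<noteq> 0" using beta_nz by simp

lemma pow_cancel: assumes "(u::'b) \<noteq> 0" "v \<noteq> 0" "u * v ^ q = v * u ^ q"
  shows "u ^ (q - 1) = v ^ (q - 1)"
proof -
  obtain k where k: "q = Suc k" using q_ge3 by (cases q) auto
  have "(u * v) * v ^ k = (u * v) * u ^ k" using assms(3) unfolding k by (simp add: ac_simps)
  moreover have "u * v \<noteq> 0" using assms(1,2) by simp
  ultimately have "v ^ k = u ^ k" by simp
  then show ?thesis using k by simp
qed

lemma pow_swap: "((x::'b) ^ a) ^ b = (x ^ b) ^ a"
  by (simp flip: power_mult add: mult.commute)

lemma no_w1: "a \<noteq> 0 \<Longrightarrow> e a * \<beta> ^ i \<noteq> 0" using bnz by simp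

lemma no_w2: assumes "a \<noteq> 0" "b \<noteq> 0" "i \<noteq> j" "i < n" "j < n"
  shows "e a * \<beta> ^ i + e b * \<beta> ^ j \<noteq> 0"
proof
  assume s: "e a * \<beta> ^ i + e b * \<beta> ^ j = 0"
  define u where "u = \<beta> ^ i"
  define v where "v = \<beta> ^ j"
  have h1: "e a * u = - (e b * v)" using s unfolding u_def v_def by (simp add: eq_neg_iff_add_eq_0)
  then have "(e a * u) ^ q = (- (e b * v)) ^ q" by simp
  then have h2: "e a * u ^ q = - (e b * v ^ q)" using oddq by (simp add: power_mult_distrib e_fix1)
  have "e a * (u * v ^ q) = (e a * u) * v ^ q" by simp
  also have "\<dots> = - (e b * v * v ^ q)" using h1 by simp
  also have "\<dots> = (e a * u ^ q) * v" using h2 by simp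
  also have "\<dots> = e a * (v * u ^ q)" by simp
  finally have "u * v ^ q = v * u ^ q" using assms(1) by simp
  then have "u ^ (q - 1) = v ^ (q - 1)" using pow_cancel bnz unfolding u_def v_def by blast
  moreover have "q - 1 > 0" using q_ge3 by simp
  ultimately show False using beta_diff[OF dvd_qm1_qm _ assms(3-5)] unfolding u_def v_def by blast
qed

lemma sig_term: "(e a * \<beta> ^ i) ^ (q ^ m) = e a * inverse (\<beta> ^ i)"
  by (simp add: power_mult_distrib e_fix sig_beta)

lemma no_w3_even: assumes ev: "even m" and nz: "a \<noteq> 0" "b \<noteq> 0" "c \<noteq> 0"
  and d: "i \<noteq> j" "i \<noteq> kk" "j \<noteq> kk" and lt: "i < n" "j < n" "kk < n"
  shows "e a * \<beta> ^ i + e b * \<beta> ^ j + e c * \<beta> ^ kk \<noteq> 0"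
proof
  assume s: "e a * \<beta> ^ i + e b * \<beta> ^ j + e c * \<beta> ^ kk = 0"
  define u where "u = \<beta> ^ i"
  define v where "v = \<beta> ^ j"
  define w where "w = \<beta> ^ kk"
  define A where "A = e a"
  define B where "B = e b"
  define C where "C = e c"
  have unz: "u \<noteq> 0" "v \<noteq> 0" "w \<noteq> 0" unfolding u_def v_def w_def using bnz by auto
  have E1: "A * u + B * v + C * w = 0" using s unfolding u_def v_def w_def A_def B_def C_def .
  have "(e a * \<beta> ^ i + e b * \<beta> ^ j + e c * \<beta> ^ kk) ^ (q ^ m) = 0" using s q_ge3 by simp
  then have "A * inverse u + B * inverse v + C * inverse w = 0"
    unfolding sig_add sig_term u_def v_def w_def A_def B_def C_def .
  then have z: "(A * inverse u + B * inverse v + C * inverse w) * (u * v * w) = 0" by simp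
  have "(A * inverse u + B * inverse v + C * inverse w) * (u * v * w) = A * v * w + B * u * w + C * u * v"
    using unz by (simp add: field_simps)
  then have E2: "A * v * w + B * u * w + C * u * v = 0" using z by simp
  define K where "K = e (a * a + b * b - c * c)"
  have KK: "K = A * A + B * B - C * C" unfolding K_def A_def B_def C_def by simp
  have "A * B * u^2 + K * u * v + A * B * v^2 = (A * v + B * u) * (A * u + B * v + C * w) - C * (A * v * w + B * u * w + C * u * v)"
    unfolding KK by (simp add: algebra_simps power2_eq_square)
  then have F1: "A * B * u^2 + K * u * v + A * B * v^2 = 0" using E1 E2 by simp
  then have P: "(A * B * u^2 + K * u * v + A * B * v^2) ^ (q ^ 1) = 0" using q_ge3 by simp
  have "(A * B * u^2 + K * u * v + A * B * v^2) ^ (q ^ 1) =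
     A ^ (q ^ 1) * B ^ (q ^ 1) * (u^2) ^ (q ^ 1) + K ^ (q ^ 1) * u ^ (q ^ 1) * v ^ (q ^ 1) + A ^ (q ^ 1) * B ^ (q ^ 1) * (v^2) ^ (q ^ 1)"
    by (simp only: frob power_mult_distrib)
  moreover have "A ^ (q ^ 1) = A" "B ^ (q ^ 1) = B" "K ^ (q ^ 1) = K"
    unfolding A_def B_def K_def by (rule e_fix)+
  ultimately have "(A * B * u^2 + K * u * v + A * B * v^2) ^ (q ^ 1) = A * B * (u ^ q)^2 + K * u ^ q * v ^ q + A * B * (v ^ q)^2"
    by (simp add: pow_swap[of _ 2])
  then have F2: "A * B * (u ^ q)^2 + K * u ^ q * v ^ q + A * B * (v ^ q)^2 = 0" using P by simp
  have "A * B * (u * v ^ q - v * u ^ q) * (u * u ^ q - v * v ^ q) =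
      u ^ q * v ^ q * (A * B * u^2 + K * u * v + A * B * v^2) - u * v * (A * B * (u ^ q)^2 + K * u ^ q * v ^ q + A * B * (v ^ q)^2)"
    by (simp add: algebra_simps power2_eq_square)
  then have "A * B * (u * v ^ q - v * u ^ q) * (u * u ^ q - v * v ^ q) = 0" using F1 F2 by simp
  moreover have "A \<noteq> 0" "B \<noteq> 0" using nz unfolding A_def B_def by auto
  ultimately have "u * v ^ q = v * u ^ q \<or> u * u ^ q = v * v ^ q" by simp
  then show False
  proof
    assume "u * v ^ q = v * u ^ q"
    then have "u ^ (q - 1) = v ^ (q - 1)" using pow_cancel unz by blast
    moreover have "q - 1 > 0" using q_ge3 by simp
    ultimately show False using beta_diff[OF dvd_qm1_qm _ d(1) lt(1,2)] unfolding u_def v_def by blast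
  next
    assume "u * u ^ q = v * v ^ q"
    then have "u ^ (q + 1) = v ^ (q + 1)" by simp
    then show False using beta_diff[OF dvd_qp1_qm[OF ev] _ d(1) lt(1,2)] unfolding u_def v_def by simp
  qed
qed

end

context cs begin

lemma q3_p: "q = 3 \<Longrightarrow> p = 3"
proof -
  assume q3: "q = 3"
  have "p dvd q" using qpk kpos by (simp add: dvd_power)
  then have "p dvd 3" using q3 by simp
  moreover have "prime (3::nat)" by simp
  ultimately show "p = 3" using p primes_dvd_imp_eq by blast
qed

lemma three0: "q = 3 \<Longrightarrow> (3::'b) = 0"
proof -
  assume "q = 3"
  then have "CHAR('b) = 3" using q3_p CHARb by simp
  then show "(3::'b) = 0" using of_nat_CHAR[where 'a='b] by simp
qed

lemma sq1: assumes "q = 3" "a \<noteq> 0" shows "e a ^ 2 = 1"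
proof -
  have "a ^ 3 = a" using a_fix[of a 1] assms(1) by simp
  then have "a * (a * a) = a * 1" by (simp add: power3_eq_cube)
  then have "a * a = 1" using assms(2) by simp
  then have "e (a * a) = 1" by simp
  then show ?thesis by (simp add: power2_eq_square)
qed

lemma sig_U: assumes "q = 3" "a \<noteq> 0" shows "(e a * \<beta> ^ i) ^ (q ^ m) = inverse (e a * \<beta> ^ i)"
proof -
  have "e a * e a = 1" using sq1[OF assms] by (simp add: power2_eq_square)
  then have "inverse (e a) = e a" by (metis inverse_unique)
  then show ?thesis unfolding sig_term by (simp add: inverse_mult_distrib)
qed

lemma sq_U: assumes "q = 3" "a \<noteq> 0" shows "(e a * \<beta> ^ i) ^ 2 = (\<beta> ^ i) ^ 2"
  using sq1[OF assms] by (simp add: power_mult_distrib)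

lemma U_nz: "a \<noteq> 0 \<Longrightarrow> e a * \<beta> ^ i \<noteq> 0" using bnz by simp

lemma U_ne: assumes "q = 3" "a \<noteq> 0" "b \<noteq> 0" "i \<noteq> j" "i < n" "j < n"
  shows "e a * \<beta> ^ i \<noteq> e b * \<beta> ^ j" "e a * \<beta> ^ i \<noteq> - (e b * \<beta> ^ j)"
proof -
  have "(e a * \<beta> ^ i) ^ 2 \<noteq> (e b * \<beta> ^ j) ^ 2"
    unfolding sq_U[OF assms(1,2)] sq_U[OF assms(1,3)] using beta_sq_diff assms(4-6) by blast
  then show "e a * \<beta> ^ i \<noteq> e b * \<beta> ^ j" "e a * \<beta> ^ i \<noteq> - (e b * \<beta> ^ j)" by auto
qed

lemma no_w3_q3: assumes q3: "q = 3" and nz: "a \<noteq> 0" "b \<noteq> 0" "c \<noteq> 0"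
  and d: "i \<noteq> j" "i \<noteq> kk" "j \<noteq> kk" and lt: "i < n" "j < n" "kk < n"
  shows "e a * \<beta> ^ i + e b * \<beta> ^ j + e c * \<beta> ^ kk \<noteq> 0"
proof
  define U1 where "U1 = e a * \<beta> ^ i"
  define U2 where "U2 = e b * \<beta> ^ j"
  define U3 where "U3 = e c * \<beta> ^ kk"
  assume "e a * \<beta> ^ i + e b * \<beta> ^ j + e c * \<beta> ^ kk = 0"
  then have S: "U1 + U2 + U3 = 0" unfolding U1_def U2_def U3_def .
  have nz': "U1 \<noteq> 0" "U2 \<noteq> 0" "U3 \<noteq> 0" unfolding U1_def U2_def U3_def using U_nz nz by auto
  have "(U1 + U2 + U3) ^ (q ^ m) = 0" using S q_ge3 by simp
  then have "inverse U1 + inverse U2 + inverse U3 = 0"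
    unfolding sig_add U1_def U2_def U3_def sig_U[OF q3 nz(1)] sig_U[OF q3 nz(2)] sig_U[OF q3 nz(3)] .
  moreover have "(inverse U1 + inverse U2 + inverse U3) * (U1 * U2 * U3) = U2 * U3 + U1 * U3 + U1 * U2"
    using nz' by (simp add: field_simps)
  ultimately have P: "U2 * U3 + U1 * U3 + U1 * U2 = 0" by simp
  have "(U1 - U2) ^ 2 = (U1 + U2) * (U1 + U2 + U3) - (U2 * U3 + U1 * U3 + U1 * U2) - 3 * U1 * U2"
    by (simp add: algebra_simps power2_eq_square)
  also have "\<dots> = 0" using S P three0[OF q3] by simp
  finally have "U1 = U2" by simp
  then show False using U_ne(1)[OF q3 nz(1,2) d(1) lt(1,2)] unfolding U1_def U2_def by simp
qed

lemma no_w4_q3: assumes q3: "q = 3" and nz: "a \<noteq> 0" "b \<noteq> 0" "c \<noteq> 0" "d \<noteq> 0"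
  and ds: "i \<noteq> j" "i \<noteq> kk" "i \<noteq> l'" "j \<noteq> kk" "j \<noteq> l'" "kk \<noteq> l'"
  and lt: "i < n" "j < n" "kk < n" "l' < n"
  shows "e a * \<beta> ^ i + e b * \<beta> ^ j + e c * \<beta> ^ kk + e d * \<beta> ^ l' \<noteq> 0"
proof
  define U1 where "U1 = e a * \<beta> ^ i"
  define U2 where "U2 = e b * \<beta> ^ j"
  define U3 where "U3 = e c * \<beta> ^ kk"
  define U4 where "U4 = e d * \<beta> ^ l'"
  assume "e a * \<beta> ^ i + e b * \<beta> ^ j + e c * \<beta> ^ kk + e d * \<beta> ^ l' = 0"
  then have S: "U1 + U2 + U3 + U4 = 0" unfolding U1_def U2_def U3_def U4_def .
  have nz': "U1 \<noteq> 0" "U2 \<noteq> 0" "U3 \<noteq> 0" "U4 \<noteq> 0" unfolding U1_def U2_def U3_def U4_def using U_nz nz by auto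
  have "(U1 + U2 + U3 + U4) ^ (q ^ m) = 0" using S q_ge3 by simp
  then have "inverse U1 + inverse U2 + inverse U3 + inverse U4 = 0"
    unfolding sig_add U1_def U2_def U3_def U4_def sig_U[OF q3 nz(1)] sig_U[OF q3 nz(2)] sig_U[OF q3 nz(3)] sig_U[OF q3 nz(4)] .
  moreover have "(inverse U1 + inverse U2 + inverse U3 + inverse U4) * (U1 * U2 * U3 * U4) =
      U2 * U3 * U4 + U1 * U3 * U4 + U1 * U2 * U4 + U1 * U2 * U3"
    using nz' by (simp add: field_simps)
  ultimately have P: "U2 * U3 * U4 + U1 * U3 * U4 + U1 * U2 * U4 + U1 * U2 * U3 = 0" by simp
  have "(U1 + U2) * (U3 * U4 - U1 * U2) = (U2 * U3 * U4 + U1 * U3 * U4 + U1 * U2 * U4 + U1 * U2 * U3) - (U1 + U2 + U3 + U4) * U1 * U2"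
    by (simp add: algebra_simps)
  also have "\<dots> = 0" using S P by simp
  finally have "U1 + U2 = 0 \<or> U3 * U4 = U1 * U2" by simp
  then show False
  proof
    assume "U1 + U2 = 0"
    then have "U1 = - U2" by (simp add: eq_neg_iff_add_eq_0)
    then show False using U_ne(2)[OF q3 nz(1,2) ds(1) lt(1,2)] unfolding U1_def U2_def by simp
  next
    assume h: "U3 * U4 = U1 * U2"
    have "(U1 + U3) * (U1 + U4) = U1 * (U1 + U2 + U3 + U4) + (U3 * U4 - U1 * U2)"
      by (simp add: algebra_simps)
    also have "\<dots> = 0" using S h by simp
    finally have "U1 = - U3 \<or> U1 = - U4" by (simp add: eq_neg_iff_add_eq_0)
    then show False using U_ne(2)[OF q3 nz(1,3) ds(2) lt(1,3)] U_ne(2)[OF q3 nz(1,4) ds(3) lt(1,4)]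
      unfolding U1_def U3_def U4_def by blast
  qed
qed

end

context cs begin

definition supp :: "'a poly \<Rightarrow> nat set" where "supp c = {i. i < n \<and> coeff c i \<noteq> 0}"

lemma wt_supp: "hamming_wt n c = card (supp c)" unfolding hamming_wt_def supp_def by simp

lemma supp_fin: "finite (supp c)" unfolding supp_def by simp

lemma supp_lt: "i \<in> supp c \<Longrightarrow> i < n" and supp_nz: "i \<in> supp c \<Longrightarrow> coeff c i \<noteq> 0"
  unfolding supp_def by auto

lemma wt_le_n: "hamming_wt n (c::'a poly) \<le> n"
proof -
  have "card (supp c) \<le> card {..<n}" by (intro card_mono) (auto simp: supp_def)
  then show ?thesis unfolding wt_supp by simp
qed

lemma ev_supp: assumes "degree c < n" shows "ev c \<beta> = (\<Sum>i\<in>supp c. e (coeff c i) * \<beta> ^ i)"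
proof -
  let ?f = "\<lambda>i. e (coeff c i) * \<beta> ^ i"
  have "ev c \<beta> = (\<Sum>i\<le>degree c. ?f i)" by (rule ev_altdef)
  also have "\<dots> = (\<Sum>i<n. ?f i)"
    by (rule sum.mono_neutral_left) (use assms in \<open>auto simp: coeff_eq_0\<close>)
  also have "\<dots> = (\<Sum>i\<in>supp c. ?f i)"
    by (rule sum.mono_neutral_right) (auto simp: supp_def)
  finally show ?thesis .
qed

lemma wt0: fixes c :: "'a poly" assumes "degree c < n" "hamming_wt n c = 0" shows "c = 0"
proof (rule poly_eqI)
  fix i
  have "supp c = {}" using assms(2) supp_fin unfolding wt_supp by simp
  then show "coeff c i = coeff 0 i" using assms(1) unfolding supp_def
    by (cases "i < n") (auto simp: coeff_eq_0)
qed

lemma wt_lb: assumes "c \<noteq> 0" "degree c < n" "ev c \<beta> = 0"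
  shows "hamming_wt n c \<ge> 3" "q = 3 \<Longrightarrow> hamming_wt n c \<ge> 5" "even m \<Longrightarrow> hamming_wt n c \<ge> 4"
proof -
  let ?S = "supp c"
  let ?f = "\<lambda>i. e (coeff c i) * \<beta> ^ i"
  have sum0: "(\<Sum>i\<in>?S. ?f i) = 0" using ev_supp assms by simp
  have w0: "card ?S \<noteq> 0" using wt0 assms(1,2) unfolding wt_supp by auto
  have w1: "card ?S \<noteq> 1"
  proof
    assume "card ?S = 1"
    then obtain i where "?S = {i}" by (rule card_1_singletonE)
    then show False using sum0 no_w1[of "coeff c i" i] supp_nz[of i c] by auto
  qed
  have w2: "card ?S \<noteq> 2"
  proof
    assume "card ?S = 2"
    then obtain i j where S: "?S = {i, j}" "i \<noteq> j" by (auto simp: card_2_iff)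
    then have "?f i + ?f j = 0" using sum0 by simp
    then show False using no_w2[of "coeff c i" "coeff c j" i j] S supp_nz[of _ c] supp_lt[of _ c] by auto
  qed
  have w3: "\<exists>i j kk. ?S = {i, j, kk} \<and> i \<noteq> j \<and> j \<noteq> kk \<and> i \<noteq> kk" if c3: "card ?S = 3"
    using c3 by (simp add: card_3_iff)
  show "hamming_wt n c \<ge> 3" unfolding wt_supp using w0 w1 w2 by linarith
  show "hamming_wt n c \<ge> 4" if ev: "even m"
  proof -
    have "card ?S \<noteq> 3"
    proof
      assume "card ?S = 3"
      then obtain i j kk where S: "?S = {i, j, kk}" "i \<noteq> j" "j \<noteq> kk" "i \<noteq> kk" using w3 by blast
      then have s: "?f i + ?f j + ?f kk = 0" using sum0 by (simp add: add.assoc)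
      have m: "i \<in> ?S" "j \<in> ?S" "kk \<in> ?S" using S(1) by auto
      show False using no_w3_even[OF ev supp_nz[OF m(1)] supp_nz[OF m(2)] supp_nz[OF m(3)] S(2) S(4) S(3)
        supp_lt[OF m(1)] supp_lt[OF m(2)] supp_lt[OF m(3)]] s by simp
    qed
    then show ?thesis unfolding wt_supp using w0 w1 w2 by linarith
  qed
  show "hamming_wt n c \<ge> 5" if q3: "q = 3"
  proof -
    have n3: "card ?S \<noteq> 3"
    proof
      assume "card ?S = 3"
      then obtain i j kk where S: "?S = {i, j, kk}" "i \<noteq> j" "j \<noteq> kk" "i \<noteq> kk" using w3 by blast
      then have s: "?f i + ?f j + ?f kk = 0" using sum0 by (simp add: add.assoc)
      have m: "i \<in> ?S" "j \<in> ?S" "kk \<in> ?S" using S(1) by auto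
      show False using no_w3_q3[OF q3 supp_nz[OF m(1)] supp_nz[OF m(2)] supp_nz[OF m(3)] S(2) S(4) S(3)
        supp_lt[OF m(1)] supp_lt[OF m(2)] supp_lt[OF m(3)]] s by simp
    qed
    have n4: "card ?S \<noteq> 4"
    proof
      assume "card ?S = 4"
      then obtain i B where B: "?S = insert i B" "i \<notin> B" "card B = 3"
        using card_Suc_eq[of ?S 3] by auto
      then obtain j kk l' where J: "B = {j, kk, l'}" "j \<noteq> kk" "kk \<noteq> l'" "j \<noteq> l'" by (auto simp: card_3_iff)
      have fB: "finite B" using J by simp
      have "(\<Sum>x\<in>?S. ?f x) = ?f i + (?f j + (?f kk + ?f l'))" using B J by simp
      then have "?f i + ?f j + ?f kk + ?f l' = 0" using sum0 by (simp add: add.assoc)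
      moreover have d: "i \<noteq> j" "i \<noteq> kk" "i \<noteq> l'" using B J by auto
      moreover have m: "i \<in> ?S" "j \<in> ?S" "kk \<in> ?S" "l' \<in> ?S" using B J by auto
      ultimately show False using no_w4_q3[OF q3 supp_nz[OF m(1)] supp_nz[OF m(2)] supp_nz[OF m(3)] supp_nz[OF m(4)]
        d J(2) J(4) J(3) supp_lt[OF m(1)] supp_lt[OF m(2)] supp_lt[OF m(3)] supp_lt[OF m(4)]] by blast
    qed
    show ?thesis unfolding wt_supp using w0 w1 w2 n3 n4 by linarith
  qed
qed

end

definition pairs :: "nat \<Rightarrow> (nat \<times> nat) set" where "pairs N = {(i, j). i < j \<and> j < N}"

lemma pairs_fin: "finite (pairs N)"
  by (rule finite_subset[of _ "{..<N} \<times> {..<N}"]) (auto simp: pairs_def)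

lemma card_pairs: "2 * card (pairs N) = N * (N - 1)"
proof (induction N)
  case 0 then show ?case by (simp add: pairs_def)
next
  case (Suc N)
  have "pairs (Suc N) = pairs N \<union> ({..<N} \<times> {N})" by (auto simp: pairs_def)
  moreover have "pairs N \<inter> ({..<N} \<times> {N}) = {}" by (auto simp: pairs_def)
  ultimately have "card (pairs (Suc N)) = card (pairs N) + N"
    using pairs_fin by (simp add: card_Un_disjoint)
  then show ?case using Suc.IH by (cases N) (auto simp: algebra_simps)
qed

definition vp :: "(nat \<times> nat) \<times> ('a::comm_monoid_add \<times> 'a) \<Rightarrow> 'a poly" where
  "vp x = monom (fst (snd x)) (fst (fst x)) + monom (snd (snd x)) (snd (fst x))"

lemma coeff_vp: "coeff (vp ((i, j), (a, b))) t = (if t = i then a else 0) + (if t = j then b else 0)"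
  unfolding vp_def by (simp add: coeff_monom)

lemma vp_inj: "inj_on vp (pairs N \<times> ((UNIV - {0::'a::comm_ring_1}) \<times> (UNIV - {0})))"
proof (rule inj_onI)
  fix x y assume x: "x \<in> pairs N \<times> ((UNIV - {0::'a}) \<times> (UNIV - {0}))"
    and y: "y \<in> pairs N \<times> ((UNIV - {0::'a}) \<times> (UNIV - {0}))" and eq: "vp x = vp y"
  obtain i j a b where xd: "x = ((i, j), (a, b))" by (metis prod.collapse)
  obtain i' j' a' b' where yd: "y = ((i', j'), (a', b'))" by (metis prod.collapse)
  have h: "i < j" "a \<noteq> 0" "b \<noteq> 0" "i' < j'" "a' \<noteq> 0" "b' \<noteq> 0"
    using x y xd yd by (auto simp: pairs_def)
  have sp: "{t. coeff (vp x) t \<noteq> 0} = {i, j}" using h unfolding xd coeff_vp by auto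
  have sp': "{t. coeff (vp y) t \<noteq> 0} = {i', j'}" using h unfolding yd coeff_vp by auto
  have "{i, j} = {i', j'}" using sp sp' eq by simp
  then have ij: "i = i'" "j = j'" using h by (auto simp: doubleton_eq_iff)
  have "coeff (vp x) i = coeff (vp y) i" "coeff (vp x) j = coeff (vp y) j" using eq by auto
  then have "a = a'" "b = b'" using h ij unfolding xd yd coeff_vp by auto
  then show "x = y" using xd yd ij by simp
qed

context cs begin

lemma card_Ast: "card (UNIV - {0::'a}) = q - 1" using ca by (simp add: card_Diff_subset)

lemma deg_lt: assumes "\<And>t. t \<ge> n \<Longrightarrow> coeff c t = 0" shows "degree c < n"
proof -
  have "degree c \<le> n - 1" by (rule degree_le) (use assms in auto)
  then show ?thesis using n_pos by simp
qed

lemma wt_le_card: assumes "supp c \<subseteq> set xs" shows "hamming_wt n c \<le> length xs"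
  unfolding wt_supp using card_mono[OF _ assms] card_length[of xs] by (meson List.finite_set le_trans)

lemma supp_sub: "supp c \<subseteq> A \<longleftrightarrow> (\<forall>t. t < n \<longrightarrow> t \<notin> A \<longrightarrow> coeff c t = 0)"
  unfolding supp_def by auto

lemma exists_w4: assumes "q > 3"
  shows "\<exists>c. c \<noteq> 0 \<and> degree c < n \<and> ev c \<beta> = 0 \<and> hamming_wt n c \<le> 4"
proof -
  define D where "D = pairs n \<times> ((UNIV - {0::'a}) \<times> (UNIV - {0::'a}))"
  define F where "F x = ev (vp x) \<beta>" for x
  define X where "X = q ^ m"
  have X2: "CARD('b) = X * X" using cb2 unfolding X_def by (simp add: power_mult power2_eq_square mult.commute)
  have X9: "X \<ge> 9" using qm_ge X_def by simp
  have nX: "2 * n = X + 1" using two_n X_def by simp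
  have "8 * card (pairs n) = (2 * n) * (2 * n - 2)" using card_pairs[of n] by (simp add: algebra_simps)
  also have "\<dots> = (X + 1) * (X - 1)" using nX by simp
  also have "\<dots> = X * X - 1" using sq_minus1 by simp
  finally have cp: "8 * card (pairs n) = X * X - 1" .
  have q5: "q - 1 \<ge> 4" using assms oddq by presburger
  have "card D = card (pairs n) * ((q - 1) * (q - 1))" unfolding D_def using pairs_fin
    by (simp add: card_cartesian_product card_Ast)
  moreover have "(q - 1) * (q - 1) \<ge> 16" using q5 mult_le_mono[OF q5 q5] by simp
  ultimately have "card D \<ge> card (pairs n) * 16" by (metis mult_le_mono2)
  moreover have XX: "X * X \<ge> 81" using mult_le_mono[OF X9 X9] by simp
  moreover have "8 * card (pairs n) + 1 = X * X" using cp XX by simp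
  ultimately have cD: "card D > X * X" by linarith
  have "card (F ` D) \<le> card (UNIV :: 'b set)" by (intro card_mono) auto
  then have "card (F ` D) < card D" using cD X2 by simp
  then have "\<not> inj_on F D" using card_image by fastforce
  then obtain x y where xy: "x \<in> D" "y \<in> D" "x \<noteq> y" "F x = F y" unfolding inj_on_def by blast
  obtain i j a b where xd: "x = ((i, j), (a, b))" by (metis prod.collapse)
  obtain i' j' a' b' where yd: "y = ((i', j'), (a', b'))" by (metis prod.collapse)
  have lt: "i < n" "j < n" "i' < n" "j' < n" using xy xd yd unfolding D_def pairs_def by auto
  define c where "c = vp x - vp y"
  have "vp x \<noteq> vp y" using vp_inj xy unfolding D_def inj_on_def by blast
  then have "c \<noteq> 0" unfolding c_def by simp
  moreover have cc: "coeff c t = coeff (vp x) t - coeff (vp y) t" for t unfolding c_def by simp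
  have "degree c < n" by (rule deg_lt) (use lt in \<open>auto simp: cc xd yd coeff_vp\<close>)
  moreover have "ev c \<beta> = 0" using xy(4) unfolding c_def F_def by (simp add: ev_diff)
  moreover have "hamming_wt n c \<le> length [i, j, i', j']"
    by (rule wt_le_card) (auto simp: supp_sub cc xd yd coeff_vp)
  ultimately show ?thesis by auto
qed

lemma exists_w5: assumes q3: "q = 3" and m3: "m \<ge> 3"
  shows "\<exists>c. c \<noteq> 0 \<and> degree c < n \<and> ev c \<beta> = 0 \<and> hamming_wt n c \<le> 5"
proof -
  define N where "N = n - 1"
  define D where "D = pairs N \<times> (((UNIV - {0::'a}) \<times> (UNIV - {0::'a})) \<times> (UNIV :: 'a set))"
  define v3 where "v3 x = vp (fst x, fst (snd x)) + monom (snd (snd x)) N" for x :: "(nat \<times> nat) \<times> (('a \<times> 'a) \<times> 'a)"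
  define F where "F x = ev (v3 x) \<beta>" for x
  define X where "X = q ^ m"
  have X2: "CARD('b) = X * X" using cb2 unfolding X_def by (simp add: power_mult power2_eq_square mult.commute)
  have nX: "X = 2 * N + 1" using two_n n_pos X_def N_def by simp
  have "(3::nat) ^ 3 \<le> 3 ^ m" using m3 by (intro power_increasing) auto
  then have "X \<ge> 27" using q3 X_def by simp
  then have N6: "N \<ge> 6" using nX by simp
  then obtain M where M: "N = M + 6" by (metis add.commute le_Suc_ex)
  have ineq: "6 * (N * (N - 1)) > X * X" unfolding nX M by (simp add: algebra_simps)
  have "card D = card (pairs N) * 12" unfolding D_def using pairs_fin
    by (simp add: card_cartesian_product card_Ast ca q3)
  then have cD: "card D > X * X" using card_pairs[of N] ineq by linarith
  have "card (F ` D) \<le> card (UNIV :: 'b set)" by (intro card_mono) auto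
  then have "card (F ` D) < card D" using cD X2 by simp
  then have "\<not> inj_on F D" using card_image by fastforce
  then obtain x y where xy: "x \<in> D" "y \<in> D" "x \<noteq> y" "F x = F y" unfolding inj_on_def by blast
  obtain i j a b t where xd: "x = ((i, j), ((a, b), t))" by (metis prod.collapse)
  obtain i' j' a' b' t' where yd: "y = ((i', j'), ((a', b'), t'))" by (metis prod.collapse)
  have lt: "i < N" "j < N" "i' < N" "j' < N" using xy xd yd unfolding D_def pairs_def by auto
  have Nn: "N < n" using n_pos N_def by simp
  have cv3: "coeff (v3 ((i0, j0), ((a0, b0), t0))) s = coeff (vp ((i0, j0), (a0, b0))) s + (if s = N then t0 else 0)"
    for i0 j0 a0 b0 t0 s unfolding v3_def by (simp add: coeff_monom)
  have "v3 x \<noteq> v3 y"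
  proof
    assume eq: "v3 x = v3 y"
    have "coeff (v3 x) N = coeff (v3 y) N" using eq by simp
    then have tt: "t = t'" using lt unfolding xd yd cv3 coeff_vp by simp
    have "vp ((i, j), (a, b)) = vp ((i', j'), (a', b'))"
      using eq unfolding xd yd v3_def tt by simp
    moreover have "((i, j), (a, b)) \<in> pairs N \<times> ((UNIV - {0::'a}) \<times> (UNIV - {0}))"
      "((i', j'), (a', b')) \<in> pairs N \<times> ((UNIV - {0::'a}) \<times> (UNIV - {0}))"
      using xy xd yd unfolding D_def by auto
    ultimately have "((i, j), (a, b)) = ((i', j'), (a', b'))" by (rule inj_onD[OF vp_inj])
    then show False using xy(3) xd yd tt by simp
  qed
  define c where "c = v3 x - v3 y"
  have "c \<noteq> 0" using \<open>v3 x \<noteq> v3 y\<close> unfolding c_def by simp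
  moreover have cc: "coeff c s = coeff (v3 x) s - coeff (v3 y) s" for s unfolding c_def by simp
  have "degree c < n" by (rule deg_lt) (use lt Nn in \<open>auto simp: cc xd yd cv3 coeff_vp\<close>)
  moreover have "ev c \<beta> = 0" using xy(4) unfolding c_def F_def by (simp add: ev_diff)
  moreover have "hamming_wt n c \<le> length [i, j, i', j', N]"
    by (rule wt_le_card) (auto simp: supp_sub cc xd yd cv3 coeff_vp)
  ultimately show ?thesis by auto
qed

lemma qp1_dvd: assumes "odd m" shows "q + 1 dvd q ^ m + 1"
proof -
  have "[int q = - 1] (mod (int q + 1))" by (simp add: cong_iff_dvd_diff)
  then have "[int q ^ m = (- 1) ^ m] (mod (int q + 1))" by (rule cong_pow)
  then have "[int q ^ m = - 1] (mod (int q + 1))" using assms by simp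
  then have "int q + 1 dvd int q ^ m + 1" by (simp add: cong_iff_dvd_diff)
  then have "int (q + 1) dvd int (q ^ m + 1)" by (simp only: of_nat_add of_nat_1 of_nat_power)
  then show ?thesis by (simp only: int_dvd_int_iff)
qed

lemma exists_w3: assumes "q > 3" "odd m"
  shows "\<exists>c. c \<noteq> 0 \<and> degree c < n \<and> ev c \<beta> = 0 \<and> hamming_wt n c \<le> 3"
proof -
  define k0 where "k0 = 2 * n div (q + 1)"
  have dv: "(q + 1) dvd 2 * n" using qp1_dvd[OF assms(2)] two_n by simp
  have k0q: "k0 * (q + 1) = 2 * n" unfolding k0_def by (rule dvd_div_mult_self[OF dv])
  have q5: "q \<ge> 5" using assms(1) oddq by presburger
  have k0pos: "k0 > 0" using k0q n_pos by (cases k0) auto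
  have "k0 * 6 \<le> k0 * (q + 1)" using q5 by simp
  then have k0n: "2 * k0 < n" using k0q k0pos by linarith
  define x where "x = \<beta> ^ k0"
  have "x ^ (q + 1) = \<beta> ^ (k0 * (q + 1))" unfolding x_def by (simp only: power_mult)
  also have "\<dots> = \<beta> ^ (2 * n)" using k0q by simp
  also have "\<dots> = 1" using beta_pow_eq1 by simp
  finally have x1: "x ^ (q + 1) = 1" .
  have e2: "q ^ 2 = (q + 1) * (q - 1) + 1" using q5 by (simp add: power2_eq_square algebra_simps)
  have "x ^ (q ^ 2) = (x ^ (q + 1)) ^ (q - 1) * x" unfolding e2 by (simp only: power_add power_mult power_one_right)
  then have xq: "x ^ (q ^ 2) = x" using x1 by simp
  define R where "R = {z :: 'b. poly (monom 1 (q ^ 2) - [:0, 1:]) z = 0}"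
  have Pnz: "monom 1 (q ^ 2) - [:0, 1:] \<noteq> (0 :: 'b poly)"
  proof
    assume "monom 1 (q ^ 2) - [:0, 1:] = (0 :: 'b poly)"
    then have "coeff (monom 1 (q ^ 2) - [:0, 1:] :: 'b poly) (q ^ 2) = 0" by simp
    moreover have "5 * 5 \<le> q * q" using mult_le_mono[OF q5 q5] .
    then have "q ^ 2 > 1" by (simp add: power2_eq_square)
    ultimately show False by (simp add: coeff_monom coeff_pCons split: nat.splits)
  qed
  have "card R \<le> degree (monom 1 (q ^ 2) - [:0, 1:] :: 'b poly)"
    unfolding R_def by (rule card_poly_roots_bound[OF Pnz])
  also have "\<dots> \<le> q ^ 2" using q5 by (intro degree_diff_le) (auto simp: degree_monom_le power2_eq_square)
  finally have cR: "card R \<le> q ^ 2" .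
  have finR: "finite R" unfolding R_def by (rule poly_roots_finite[OF Pnz])
  define F where "F z = e (fst z) + e (fst (snd z)) * x + e (snd (snd z)) * x ^ 2" for z :: "'a \<times> 'a \<times> 'a"
  have FR: "F ` UNIV \<subseteq> R"
  proof
    fix w assume "w \<in> F ` UNIV"
    then obtain a b c where w: "w = e a + e b * x + e c * x ^ 2" unfolding F_def by auto
    have "w ^ (q ^ 2) = e a ^ (q ^ 2) + e b ^ (q ^ 2) * x ^ (q ^ 2) + e c ^ (q ^ 2) * (x ^ (q ^ 2)) ^ 2"
      unfolding w frob power_mult_distrib by (simp add: pow_swap[of x 2])
    also have "\<dots> = w" unfolding w e_fix xq ..
    finally show "w \<in> R" unfolding R_def by (simp add: poly_monom)
  qed
  have "card (F ` UNIV) \<le> q ^ 2" using card_mono[OF finR FR] cR by simp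
  moreover have "card (UNIV :: ('a \<times> 'a \<times> 'a) set) = q ^ 3"
    using ca by (simp add: card_cartesian_product power3_eq_cube flip: UNIV_Times_UNIV)
  moreover have "q ^ 2 < q ^ 3" using q5 by (intro power_strict_increasing) auto
  ultimately have "\<not> inj F" using card_image by fastforce
  then obtain y z where yz: "y \<noteq> z" "F y = F z" unfolding inj_on_def by blast
  obtain a1 b1 c1 where yd: "y = (a1, b1, c1)" by (metis prod.collapse)
  obtain a2 b2 c2 where zd: "z = (a2, b2, c2)" by (metis prod.collapse)
  define w where "w = monom (a1 - a2) 0 + monom (b1 - b2) k0 + monom (c1 - c2) (2 * k0)"
  have cw: "coeff w t = (if t = 0 then a1 - a2 else 0) + (if t = k0 then b1 - b2 else 0) +
      (if t = 2 * k0 then c1 - c2 else 0)" for t unfolding w_def by (simp add: coeff_monom)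
  have "w \<noteq> 0"
  proof
    assume "w = 0"
    then have "coeff w 0 = 0" "coeff w k0 = 0" "coeff w (2 * k0) = 0" by auto
    then have "a1 = a2" "b1 = b2" "c1 = c2" using k0pos unfolding cw by auto
    then show False using yz(1) yd zd by simp
  qed
  moreover have "degree w < n" by (rule deg_lt) (use k0n in \<open>auto simp: cw\<close>)
  moreover have "ev w \<beta> = F y - F z"
    unfolding w_def F_def yd zd x_def by (simp add: ev_add ev_monom power_mult algebra_simps)
  then have "ev w \<beta> = 0" using yz(2) by simp
  moreover have "hamming_wt n w \<le> length [0, k0, 2 * k0]"
    by (rule wt_le_card) (auto simp: supp_sub cw)
  ultimately show ?thesis by auto
qed

end

context cs begin

definition dd where "dd = (if q = 3 then 5 else if odd m then 3 else 4)"

lemma code_mem: "c \<in> negacyclic_code n gmin \<longleftrightarrow> degree c < n \<and> ev c \<beta> = 0"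
  using code_char by simp

lemma lb_dd: assumes "c \<noteq> 0" "degree c < n" "ev c \<beta> = 0" shows "dd \<le> hamming_wt n c"
  using wt_lb[OF assms] unfolding dd_def by auto

lemma ex_dd: "\<exists>c. c \<noteq> 0 \<and> degree c < n \<and> ev c \<beta> = 0 \<and> hamming_wt n c \<le> dd"
proof (cases "q = 3")
  case q3: True
  show ?thesis
  proof (cases "m = 2")
    case True
    then have "n = 5" using n_def q3 by simp
    moreover have "degree gmin < n" using gmin(2) n_gt_2m by simp
    ultimately show ?thesis using gmin_nz gmin(3) wt_le_n[of gmin] q3 unfolding dd_def by auto
  next
    case False
    then have "m \<ge> 3" using m2 by simp
    then show ?thesis using exists_w5[OF q3] q3 unfolding dd_def by auto
  qed
next
  case False
  then have q3: "q > 3" using q_ge3 by simp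
  show ?thesis
  proof (cases "odd m")
    case True
    then show ?thesis using exists_w3[OF q3] False unfolding dd_def by auto
  next
    case ev: False
    then show ?thesis using exists_w4[OF q3] False unfolding dd_def by auto
  qed
qed

lemma min_dist_eq: "min_dist n (negacyclic_code n gmin) = dd"
proof -
  let ?W = "{hamming_wt n c |c. c \<in> negacyclic_code n gmin \<and> c \<noteq> 0}"
  have fin: "finite ?W" by (rule finite_subset[of _ "{..n}"]) (auto simp: wt_le_n)
  obtain c where c: "c \<noteq> 0" "degree c < n" "ev c \<beta> = 0" "hamming_wt n c \<le> dd" using ex_dd by blast
  then have "hamming_wt n c = dd" using lb_dd by (simp add: le_antisym)
  moreover have "c \<in> negacyclic_code n gmin" using c code_mem by simp
  ultimately have mem: "dd \<in> ?W" using c(1) by force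
  have lb: "\<forall>w\<in>?W. dd \<le> w" using lb_dd code_mem by blast
  show ?thesis unfolding min_dist_def by (rule Min_eqI[OF fin]) (use lb mem in auto)
qed

lemma main: "code_dim (negacyclic_code n (min_poly e \<beta>)) = n - 2 * m \<and>
         min_dist n (negacyclic_code n (min_poly e \<beta>)) =
           (if q = 3 then 5 else if odd m then 3 else 4)"
  using code_dim_eq min_dist_eq unfolding min_poly_eq K_def dd_def by simp

end

theorem theorem34:
  fixes q m n l :: nat
    and e :: "'a::{field,finite} \<Rightarrow> 'b::{field,finite}"
    and \<alpha> \<beta> :: 'b
  assumes "\<exists>p k. prime p \<and> k > 0 \<and> q = p ^ k"
    and "odd q"
    and "m \<ge> 2"
    and "n = (q ^ m + 1) div 2"
    and "CARD('a) = q"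
    and "l = ord (2 * n) q"
    and "CARD('b) = q ^ l"
    and "field_emb e"
    and "primitive_elem \<alpha>"
    and "\<beta> = \<alpha> ^ ((q ^ l - 1) div (2 * n))"
  shows "code_dim (negacyclic_code n (min_poly e \<beta>)) = n - 2 * m \<and>
         min_dist n (negacyclic_code n (min_poly e \<beta>)) =
           (if q = 3 then 5 else if odd m then 3 else 4)"
proof -
  obtain p k where pk: "prime p" "k > 0" "q = p ^ k" using assms(1) by blast
  interpret cs q m n l p k e \<alpha> \<beta>
    by (unfold_locales) (use pk assms in auto)
  show ?thesis by (rule main)
qed


end
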